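(* Let $\alpha>0$, let $G$ be a standard normal random variable and let $G_\alpha:=\operatorname{sgn}(G)|G|^{2/\alpha}$. Then the differential entropy of $G_\alpha$ is $$h(G_\alpha)=\Big(\frac{1}{2}-\frac{1}{\alpha}\Big)(\gamma+\ln 2)+\ln\frac{2\sqrt{2\pi}}{\alpha}+\frac{1}{2},$$ where $\gamma$ is the Euler–Mascheroni constant.
   Context: For a random variable with density $f$, the differential entropy is $h=-\int_{-\infty}^{\infty} f(x)\ln f(x)\,dx$. $\operatorname{sgn}$ denotes the signum function. *)

theory Defs
  imports "HOL-Analysis.Analysis" "HOL-Probability.Probability"
begin

definition diff_entropy :: "(real \<Rightarrow> real) \<Rightarrow> real" where
  "diff_entropy f = - (\<integral>x. f x * ln (f x) \<partial>lborel)"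

end

theory Submission
  imports Defs
begin

lemma Gamma_int_open:
  assumes "(x::real) > 0"
  shows "((\<lambda>t. t powr (x - 1) / exp t) has_integral Gamma x) {0<..}"
proof -
  have "((\<lambda>t. t powr (x - 1) / exp t) has_integral Gamma x) {0..}"
    by (rule Gamma_integral_real[OF assms])
  then show ?thesis
    by (rule has_integral_spike_set_eq[THEN iffD1, rotated 2]) (rule negligible_subset[of "{0}"]; auto)+
qed

lemma powr_quot_mono:
  assumes "(t::real) > 0" "0 < h'" "h' \<le> h"
  shows "(t powr h' - 1) / h' \<le> (t powr h - 1) / h"
proof -
  define r where "r = h' / h"
  have r: "0 \<le> r" "r \<le> 1" "h' = r * h" using assms by (auto simp: r_def)
  have "(t powr h) powr r * 1 powr (1 - r) \<le> r * t powr h + (1 - r) * 1"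
    by (rule Youngs_inequality_0) (use r assms in auto)
  then have "t powr h' - 1 \<le> r * (t powr h - 1)"
    using r by (simp add: powr_powr algebra_simps)
  then have "t powr h' - 1 \<le> h' / h * (t powr h - 1)" by (simp add: r_def)
  then show ?thesis using assms by (simp add: field_simps)
qed

lemma powr_quot_lim:
  assumes "(t::real) > 0"
  shows "(\<lambda>k. (t powr (1 / real (Suc k)) - 1) / (1 / real (Suc k))) \<longlonglongrightarrow> ln t"
proof -
  have d: "((\<lambda>h. exp (h * ln t)) has_field_derivative ln t) (at 0)"
    by (auto intro!: derivative_eq_intros)
  then have L: "((\<lambda>h. (exp ((0 + h) * ln t) - exp (0 * ln t)) / h) \<longlongrightarrow> ln t) (at 0)"
    unfolding DERIV_def .
  have s: "filterlim (\<lambda>k. 1 / real (Suc k)) (at 0) sequentially"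
  proof (rule filterlim_atI)
    show "(\<lambda>k. 1 / real (Suc k)) \<longlonglongrightarrow> 0"
      using LIMSEQ_Suc[OF lim_1_over_n] .
  qed auto
  have "((\<lambda>h. (exp ((0 + h) * ln t) - exp (0 * ln t)) / h) \<circ> (\<lambda>k. 1 / real (Suc k))) \<longlonglongrightarrow> ln t"
    using filterlim_compose[OF L s] by (simp add: o_def)
  then show ?thesis using assms by (simp add: o_def powr_def)
qed

lemma Gamma_log_half:
  "((\<lambda>t. t powr (-1/2) * ln t / exp t) has_integral (sqrt pi * (- euler_mascheroni - 2 * ln 2))) {0<..}
   \<and> (\<lambda>t::real. t powr (-1/2) * ln t / exp t) absolutely_integrable_on {0<..}"
proof -
  define h :: "nat \<Rightarrow> real" where "h k = 1 / real (Suc k)" for k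
  define f where "f k t = (t powr (1/2 + h k - 1) / exp t - t powr (1/2 - 1) / exp t) / h k" for k t
  define g where "g t = t powr (-1/2) * ln t / exp t" for t :: real
  have hpos: "h k > 0" for k by (simp add: h_def)
  have hf: "(f k has_integral (Gamma (1/2 + h k) - Gamma (1/2)) / h k) {0<..}" for k
    unfolding f_def[abs_def] using hpos[of k]
    by (intro has_integral_divide has_integral_diff Gamma_int_open) auto
  have f_eq: "f k t = t powr (-1/2) / exp t * ((t powr h k - 1) / h k)" if "t > 0" for k t
  proof -
    have "t powr (1/2 + h k - 1) = t powr h k * t powr (-1/2)"
      using that by (simp add: powr_add[symmetric])
    then show ?thesis using that hpos[of k] by (simp add: f_def field_simps)
  qed
  have mono: "f (Suc k) t \<le> f k t" if "t \<in> {0<..}" for k t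
  proof -
    have "(t powr h (Suc k) - 1) / h (Suc k) \<le> (t powr h k - 1) / h k"
      using that by (intro powr_quot_mono) (auto simp: h_def field_simps)
    moreover have "t powr (-1/2) / exp t \<ge> 0" by simp
    ultimately have "t powr (-1/2) / exp t * ((t powr h (Suc k) - 1) / h (Suc k))
       \<le> t powr (-1/2) / exp t * ((t powr h k - 1) / h k)" by (rule mult_left_mono)
    moreover have "t > 0" using that by simp
    ultimately show ?thesis by (simp only: f_eq)
  qed
  have lim: "(\<lambda>k. f k t) \<longlonglongrightarrow> g t" if "t \<in> {0<..}" for t
  proof -
    have "(\<lambda>k. t powr (-1/2) / exp t * ((t powr h k - 1) / h k)) \<longlonglongrightarrow> t powr (-1/2) / exp t * ln t"
      using that unfolding h_def by (intro tendsto_mult tendsto_const powr_quot_lim) auto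
    then show ?thesis using that by (simp add: f_eq g_def)
  qed
  have dG: "(Gamma has_field_derivative Gamma (1/2) * Digamma (1/2)) (at (1/2::real))"
    by (rule has_field_derivative_Gamma) (use nonpos_Ints_nonpos[of "1/2::real"] in auto)
  then have L: "((\<lambda>d. (Gamma (1/2 + d) - Gamma (1/2)) / d) \<longlongrightarrow> Gamma (1/2) * Digamma (1/2)) (at (0::real))"
    unfolding DERIV_def .
  have s: "filterlim h (at 0) sequentially"
  proof (rule filterlim_atI)
    show "h \<longlonglongrightarrow> 0"
      unfolding h_def using LIMSEQ_Suc[OF lim_1_over_n] .
  qed (auto simp: h_def)
  have conv: "(\<lambda>k. (Gamma (1/2 + h k) - Gamma (1/2)) / h k) \<longlonglongrightarrow> Gamma (1/2) * Digamma (1/2)"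
    using filterlim_compose[OF L s] by (simp add: o_def)
  have intf: "integral {0<..} (f k) = (Gamma (1/2 + h k) - Gamma (1/2)) / h k" for k
    using hf by (rule integral_unique)
  have "g integrable_on {0<..} \<and> (\<lambda>k. integral {0<..} (f k)) \<longlonglongrightarrow> integral {0<..} g"
  proof (rule monotone_convergence_decreasing)
    show "f k integrable_on {0<..}" for k using hf by blast
    show "bounded (range (\<lambda>k. integral {0<..} (f k)))"
      unfolding intf using conv by (intro convergent_imp_bounded) (auto simp: convergent_def)
  qed (use mono lim in auto)
  then have gi: "g integrable_on {0<..}" and gl: "(\<lambda>k. integral {0<..} (f k)) \<longlonglongrightarrow> integral {0<..} g"
    by auto
  have "integral {0<..} g = Gamma (1/2) * Digamma (1/2)"
    using LIMSEQ_unique[OF gl] conv unfolding intf by auto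
  also have "\<dots> = sqrt pi * (- euler_mascheroni - 2 * ln 2)"
    by (simp add: Gamma_one_half_real Digamma_one_half)
  finally have gval: "integral {0<..} g = sqrt pi * (- euler_mascheroni - 2 * ln 2)" .
  have a1: "(\<lambda>t. f 0 t - g t) absolutely_integrable_on {0<..}"
  proof (rule nonnegative_absolutely_integrable_1)
    show "(\<lambda>t. f 0 t - g t) integrable_on {0<..}"
      using hf gi by (intro integrable_diff) auto
    show "0 \<le> f 0 t - g t" if "t \<in> {0<..}" for t
    proof -
      have "decseq (\<lambda>k. f k t)" using mono[OF that] by (simp add: decseq_Suc_iff)
      then have "g t \<le> f 0 t" using LIMSEQ_le_const2 lim[OF that]
        by (metis decseq_def)
      then show ?thesis by simp
    qed
  qed
  have a2: "f 0 absolutely_integrable_on {0<..}"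
  proof -
    have "(\<lambda>t. t powr (1/2 + h 0 - 1) / exp t) absolutely_integrable_on {0<..}"
      using Gamma_int_open[of "1/2 + h 0"] hpos[of 0]
      by (intro nonnegative_absolutely_integrable_1) auto
    moreover have "(\<lambda>t::real. t powr (1/2 - 1) / exp t) absolutely_integrable_on {0<..}"
      using Gamma_int_open[of "1/2"]
      by (intro nonnegative_absolutely_integrable_1) auto
    ultimately show ?thesis unfolding f_def[abs_def]
      by (intro set_integrable_divide set_integral_diff(1)) auto
  qed
  have "(\<lambda>t. f 0 t - (f 0 t - g t)) absolutely_integrable_on {0<..}"
    using a2 a1 by (rule set_integral_diff(1))
  then have "g absolutely_integrable_on {0<..}" by simp
  with gi gval show ?thesis unfolding g_def[abs_def]
    using integrable_integral by fastforce
qed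

lemma phi_ln_alg:
  assumes "(x::real) \<noteq> 0"
  shows "\<bar>x\<bar> * (((x\<^sup>2/2) powr (-1/2) * ln (x\<^sup>2/2) / exp (x\<^sup>2/2)
           + ln 2 * ((x\<^sup>2/2) powr (-1/2) / exp (x\<^sup>2/2))) / (4 * sqrt pi))
         = std_normal_density x * ln \<bar>x\<bar>"
proof -
  have ax: "\<bar>x\<bar> > 0" using assms by simp
  have p: "(x\<^sup>2/2) powr (-1/2) = sqrt 2 / \<bar>x\<bar>"
  proof -
    have "(x\<^sup>2/2) powr (1/2) = sqrt (x\<^sup>2/2)" by (simp add: powr_half_sqrt)
    also have "\<dots> = \<bar>x\<bar> / sqrt 2" by (simp add: real_sqrt_divide)
    finally have "(x\<^sup>2/2) powr (1/2) = \<bar>x\<bar> / sqrt 2" .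
    then show ?thesis by (simp add: powr_minus)
  qed
  have l: "ln (x\<^sup>2/2) = 2 * ln \<bar>x\<bar> - ln 2"
  proof -
    have "ln (x\<^sup>2/2) = ln (\<bar>x\<bar>^2 / 2)" by simp
    also have "\<dots> = ln (\<bar>x\<bar>^2) - ln 2" using ax by (intro ln_divide_pos) auto
    also have "ln (\<bar>x\<bar>^2) = 2 * ln \<bar>x\<bar>" using ln_realpow[of "\<bar>x\<bar>" 2] by (simp only: of_nat_numeral)
    finally show ?thesis .
  qed
  have s: "sqrt (2 * pi) = sqrt 2 * sqrt pi" by (simp add: real_sqrt_mult)
  have e: "exp (- x\<^sup>2 / 2) = 1 / exp (x\<^sup>2/2)" by (simp add: exp_minus field_simps)
  have s2: "sqrt 2 * sqrt 2 = (2::real)" by simp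
  have "\<bar>x\<bar> * ((sqrt 2 / \<bar>x\<bar> * (2 * ln \<bar>x\<bar> - ln 2) / exp (x\<^sup>2/2)
           + ln 2 * (sqrt 2 / \<bar>x\<bar> / exp (x\<^sup>2/2))) / (4 * sqrt pi))
        = sqrt 2 * ln \<bar>x\<bar> / (2 * sqrt pi * exp (x\<^sup>2/2))"
    using ax by (simp add: field_simps)
  also have "\<dots> = 1 / (sqrt 2 * sqrt pi) * (1 / exp (x\<^sup>2/2)) * ln \<bar>x\<bar>"
    by (simp add: field_simps s2)
  finally show ?thesis unfolding p l std_normal_density_def s e .
qed

lemma phi_ln_half:
  assumes S: "S = {0<..} \<or> S = {..<(0::real)}"
  shows "((\<lambda>x. std_normal_density x * ln \<bar>x\<bar>) has_integral (- euler_mascheroni - ln 2) / 4) S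
         \<and> (\<lambda>x. std_normal_density x * ln \<bar>x\<bar>) absolutely_integrable_on S"
proof -
  define F where "F t = (t powr (-1/2) * ln t / exp t + ln 2 * (t powr (-1/2) / exp t)) / (4 * sqrt pi)" for t :: real
  have F1: "((\<lambda>t::real. t powr (-1/2) / exp t) has_integral sqrt pi) {0<..}"
    using Gamma_int_open[of "1/2"] by (simp add: Gamma_one_half_real)
  have F1a: "(\<lambda>t::real. t powr (-1/2) / exp t) absolutely_integrable_on {0<..}"
    using F1 by (intro nonnegative_absolutely_integrable_1) auto
  have F2: "((\<lambda>t::real. t powr (-1/2) * ln t / exp t) has_integral (sqrt pi * (- euler_mascheroni - 2 * ln 2))) {0<..}"
     and F2a: "(\<lambda>t::real. t powr (-1/2) * ln t / exp t) absolutely_integrable_on {0<..}"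
    using Gamma_log_half by auto
  have Fi: "(F has_integral (- euler_mascheroni - ln 2) / 4) {0<..}"
  proof -
    have "(F has_integral (sqrt pi * (- euler_mascheroni - 2 * ln 2) + ln 2 * sqrt pi) / (4 * sqrt pi)) {0<..}"
      unfolding F_def[abs_def] by (intro has_integral_divide has_integral_add has_integral_mult_right F1 F2)
    also have "(sqrt pi * (- euler_mascheroni - 2 * ln 2) + ln 2 * sqrt pi) / (4 * sqrt pi) = (- euler_mascheroni - ln 2) / 4"
      by (simp add: field_simps)
    finally show ?thesis .
  qed
  have Fa: "F absolutely_integrable_on {0<..}"
    unfolding F_def[abs_def] using F1a F2a
    by (intro set_integrable_divide set_integral_add(1) set_integrable_mult_right) auto
  have img: "(\<lambda>x. x\<^sup>2/2) ` S = {0<..}"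
  proof
    show "(\<lambda>x. x\<^sup>2/2) ` S \<subseteq> {0<..}" using S by auto
    show "{0<..} \<subseteq> (\<lambda>x. x\<^sup>2/2) ` S"
    proof
      fix t :: real assume t: "t \<in> {0<..}"
      define y where "y = (if S = {0<..} then sqrt (2*t) else - sqrt (2*t))"
      have "y \<in> S" using S t by (auto simp: y_def)
      moreover have "t = y\<^sup>2/2" using t by (simp add: y_def)
      ultimately show "t \<in> (\<lambda>x. x\<^sup>2/2) ` S" by blast
    qed
  qed
  have inj: "inj_on (\<lambda>x. x\<^sup>2/2) S"
    using S by (auto simp: inj_on_def power2_eq_iff)
  have der: "((\<lambda>x. x\<^sup>2/2) has_field_derivative x) (at x within S)" for x :: real
    by (auto intro!: derivative_eq_intros)
  have S_leb: "S \<in> sets lebesgue" using S by auto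
  note cv = has_absolute_integral_change_of_variables_1'[OF S_leb der inj, of F "(- euler_mascheroni - ln 2) / 4"]
  have "(\<lambda>x. \<bar>x\<bar> * F (x\<^sup>2/2)) absolutely_integrable_on S \<and> integral S (\<lambda>x. \<bar>x\<bar> * F (x\<^sup>2/2)) = (- euler_mascheroni - ln 2) / 4"
    using cv img Fa Fi by (auto dest: integral_unique)
  moreover have "\<bar>x\<bar> * F (x\<^sup>2/2) = std_normal_density x * ln \<bar>x\<bar>" if "x \<in> S" for x
    using that S phi_ln_alg[of x] unfolding F_def by auto
  ultimately have A: "(\<lambda>x. std_normal_density x * ln \<bar>x\<bar>) absolutely_integrable_on S"
     and B: "integral S (\<lambda>x. std_normal_density x * ln \<bar>x\<bar>) = (- euler_mascheroni - ln 2) / 4"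
    by (auto cong: set_integrable_cong integral_cong)
  then show ?thesis
    using set_lebesgue_integral_eq_integral(1)[OF A] by (metis integrable_integral)
qed

lemma phi_ln_lborel:
  "integrable lborel (\<lambda>x. std_normal_density x * ln \<bar>x\<bar>) \<and>
   integral\<^sup>L lborel (\<lambda>x. std_normal_density x * ln \<bar>x\<bar>) = - (euler_mascheroni + ln 2) / 2"
proof -
  define h where "h x = std_normal_density x * ln \<bar>x\<bar>" for x :: real
  have hm[measurable]: "h \<in> borel_measurable borel" unfolding h_def[abs_def] by measurable
  have P: "set_integrable lebesgue {0<..} h" "integral {0<..} h = (- euler_mascheroni - ln 2) / 4"
    using conjunct2[OF phi_ln_half[of "{0<..}"]] integral_unique[OF conjunct1[OF phi_ln_half[of "{0<..}"]]]
    unfolding h_def[abs_def] by auto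
  have N: "set_integrable lebesgue {..<0} h" "integral {..<0} h = (- euler_mascheroni - ln 2) / 4"
    using conjunct2[OF phi_ln_half[of "{..<0}"]] integral_unique[OF conjunct1[OF phi_ln_half[of "{..<0}"]]]
    unfolding h_def[abs_def] by auto
  have eq: "h = (\<lambda>x. indicator {0<..} x *\<^sub>R h x + indicator {..<0} x *\<^sub>R h x)"
    by (auto simp: h_def indicator_def fun_eq_iff)
  have I: "integrable lebesgue h"
    using P(1) N(1) unfolding set_integrable_def by (subst eq) (rule Bochner_Integration.integrable_add)
  have "integral\<^sup>L lebesgue h = (LINT x:{0<..}|lebesgue. h x) + (LINT x:{..<0}|lebesgue. h x)"
    using P(1) N(1) unfolding set_integrable_def set_lebesgue_integral_def by (subst eq) (rule Bochner_Integration.integral_add)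
  also have "\<dots> = - (euler_mascheroni + ln 2) / 2"
    using set_lebesgue_integral_eq_integral(2)[OF P(1)] set_lebesgue_integral_eq_integral(2)[OF N(1)] P(2) N(2)
    by simp
  finally have V: "integral\<^sup>L lebesgue h = - (euler_mascheroni + ln 2) / 2" .
  show ?thesis
    using I V integrable_completion[of h lborel] integral_completion[of h lborel]
    unfolding h_def[abs_def] by auto
qed

definition Tm :: "real \<Rightarrow> real \<Rightarrow> real" where "Tm p x = sgn x * \<bar>x\<bar> powr p"
definition dens0 :: "real \<Rightarrow> real \<Rightarrow> real" where
  "dens0 q y = q * \<bar>y\<bar> powr (q - 1) * std_normal_density (\<bar>y\<bar> powr q)"

lemma Tm_meas[measurable]: "Tm p \<in> borel_measurable borel"
  unfolding Tm_def[abs_def] by measurable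

lemma dens0_meas[measurable]: "dens0 q \<in> borel_measurable borel"
  unfolding dens0_def[abs_def] by measurable

lemma dens0_zero[simp]: "dens0 q 0 = 0"
  by (simp add: dens0_def)

lemma dens0_nonneg: "q > 0 \<Longrightarrow> dens0 q y \<ge> 0"
  by (simp add: dens0_def)

lemma abs_Tm: "\<bar>Tm p x\<bar> = \<bar>x\<bar> powr p"
  by (cases "x = 0") (auto simp: Tm_def abs_mult sgn_if)

lemma sgn_Tm: "sgn (Tm p x) = sgn x"
  by (cases "x = 0") (auto simp: Tm_def sgn_mult sgn_if)

lemma Tm_inv:
  assumes "p > 0"
  shows "Tm (1/p) (Tm p x) = x"
proof -
  have "Tm (1/p) (Tm p x) = sgn x * (\<bar>x\<bar> powr p) powr (1/p)"
    unfolding Tm_def[of "1/p"] sgn_Tm abs_Tm by simp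
  also have "(\<bar>x\<bar> powr p) powr (1/p) = \<bar>x\<bar>"
    using assms by (simp add: powr_powr)
  finally show ?thesis by (simp add: sgn_mult_abs)
qed

lemma Tm_deriv:
  assumes "p > 0" "x \<noteq> 0"
  shows "(Tm p has_field_derivative p * \<bar>x\<bar> powr (p - 1)) (at x)"
proof (cases "x > 0")
  case True
  have "((\<lambda>y. y powr p) has_field_derivative p * x powr (p - 1)) (at x)"
    using True by (rule has_real_derivative_powr)
  then have "((\<lambda>y. y powr p) has_field_derivative p * \<bar>x\<bar> powr (p - 1)) (at x)"
    using True by simp
  then show ?thesis
    by (rule has_field_derivative_transform_within_open[of _ _ _ "{0<..}"])
       (use True in \<open>auto simp: Tm_def\<close>)
next
  case False
  then have xn: "x < 0" using assms by simp
  have "((\<lambda>y. y powr p) has_field_derivative p * (-x) powr (p - 1)) (at (-x))"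
    using xn by (intro has_real_derivative_powr) simp
  then have "((\<lambda>y. - ((- y) powr p)) has_field_derivative - (p * (-x) powr (p - 1) * (-1))) (at x)"
  proof -
    have u: "(uminus has_field_derivative (-1)) (at x)"
      by (auto intro!: derivative_eq_intros)
    from DERIV_chain2[OF \<open>((\<lambda>y. y powr p) has_field_derivative p * (-x) powr (p - 1)) (at (-x))\<close> u]
    show ?thesis by (rule DERIV_minus)
  qed
  then have "((\<lambda>y. - ((- y) powr p)) has_field_derivative p * \<bar>x\<bar> powr (p - 1)) (at x)"
    using xn by simp
  then show ?thesis
    by (rule has_field_derivative_transform_within_open[of _ _ _ "{..<0}"])
       (use xn in \<open>auto simp: Tm_def\<close>)
qed

lemma Tm_key:
  assumes "p > 0" "x \<noteq> 0"
  shows "\<bar>p * \<bar>x\<bar> powr (p - 1)\<bar> * dens0 (1/p) (Tm p x) = std_normal_density x"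
proof -
  have a: "\<bar>Tm p x\<bar> powr (1/p - 1) = \<bar>x\<bar> powr (1 - p)"
  proof -
    have "p * (1/p - 1) = 1 - p" using assms by (simp add: field_simps)
    then show ?thesis unfolding abs_Tm by (simp add: powr_powr)
  qed
  have b: "\<bar>Tm p x\<bar> powr (1/p) = \<bar>x\<bar>"
    unfolding abs_Tm using assms by (simp add: powr_powr)
  have c: "std_normal_density \<bar>x\<bar> = std_normal_density x"
    by (simp add: std_normal_density_def)
  have d: "\<bar>x\<bar> powr (p - 1) * \<bar>x\<bar> powr (1 - p) = 1"
    using assms by (simp add: powr_add[symmetric])
  have "\<bar>p * \<bar>x\<bar> powr (p - 1)\<bar> * dens0 (1/p) (Tm p x)
        = (p * (1/p)) * (\<bar>x\<bar> powr (p - 1) * \<bar>x\<bar> powr (1 - p)) * std_normal_density x"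
    unfolding dens0_def a b c using assms by (simp add: abs_mult)
  also have "\<dots> = std_normal_density x" using assms d by simp
  finally show ?thesis .
qed

lemma CV:
  assumes p: "p > 0"
    and I: "integrable lborel (\<lambda>g. std_normal_density g * H (Tm p g))"
    and Hm[measurable]: "H \<in> borel_measurable borel"
  shows "integrable lborel (\<lambda>y. dens0 (1/p) y * H y) \<and>
         integral\<^sup>L lborel (\<lambda>y. dens0 (1/p) y * H y) = integral\<^sup>L lborel (\<lambda>g. std_normal_density g * H (Tm p g))"
proof -
  define S where "S = - {0::real}"
  define b where "b = integral\<^sup>L lborel (\<lambda>g. std_normal_density g * H (Tm p g))"
  define F where "F y = dens0 (1/p) y * H y" for y
  define G where "G g = std_normal_density g * H (Tm p g)" for g
  have Sl: "S \<in> sets lebesgue" unfolding S_def by simp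
  have der: "(Tm p has_field_derivative p * \<bar>x\<bar> powr (p - 1)) (at x within S)" if "x \<in> S" for x
    using Tm_deriv[OF p, of x] that by (auto simp: S_def intro: has_field_derivative_at_within)
  have inj: "inj_on (Tm p) S"
    by (rule inj_on_inverseI[where g="Tm (1/p)"]) (use Tm_inv[OF p] in auto)
  have img: "Tm p ` S = S"
  proof
    show "Tm p ` S \<subseteq> S"
      using p by (auto simp: S_def) (metis abs_Tm abs_zero powr_eq_0_iff abs_eq_0)
    show "S \<subseteq> Tm p ` S"
    proof
      fix y assume y: "y \<in> S"
      have "Tm p (Tm (1/p) y) = y" using Tm_inv[of "1/p" y] p by simp
      moreover have "Tm (1/p) y \<in> S"
        using y p by (auto simp: S_def) (metis abs_Tm abs_zero powr_eq_0_iff abs_eq_0)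
      ultimately show "y \<in> Tm p ` S" by (metis image_eqI)
    qed
  qed
  have Gm: "G \<in> borel_measurable borel" unfolding G_def[abs_def] by measurable
  have Fm: "F \<in> borel_measurable borel" unfolding F_def[abs_def] by measurable
  have IL: "integrable lebesgue G"
    using I Gm integrable_completion[of G lborel] unfolding G_def[abs_def] by auto
  have GS: "set_integrable lebesgue S G"
    unfolding set_integrable_def by (rule integrable_mult_indicator[OF Sl IL])
  have AE0: "AE x in lebesgue. x \<noteq> 0"
    by (rule AE_completion[OF AE_lborel_singleton])
  have intGS: "integral S G = b"
  proof -
    have "integral S G = (LINT x:S|lebesgue. G x)"
      using set_lebesgue_integral_eq_integral(2)[OF GS] by simp
    also have "\<dots> = integral\<^sup>L lebesgue G"
      unfolding set_lebesgue_integral_def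
      by (rule integral_cong_AE)
         (use AE0 borel_measurable_integrable[OF IL] borel_measurable_integrable[OF GS[unfolded set_integrable_def]]
          in \<open>auto simp: S_def\<close>)
    also have "\<dots> = b"
      unfolding b_def using integral_completion[of G lborel] Gm by (simp add: G_def[abs_def])
    finally show ?thesis .
  qed
  have eqS: "\<bar>p * \<bar>x\<bar> powr (p - 1)\<bar> * F (Tm p x) = G x" if "x \<in> S" for x
    using Tm_key[OF p, of x] that unfolding F_def G_def S_def by (simp add: mult.assoc[symmetric])
  have "(\<lambda>x. \<bar>p * \<bar>x\<bar> powr (p - 1)\<bar> * F (Tm p x)) absolutely_integrable_on S \<and>
        integral S (\<lambda>x. \<bar>p * \<bar>x\<bar> powr (p - 1)\<bar> * F (Tm p x)) = b"
  proof
    show "(\<lambda>x. \<bar>p * \<bar>x\<bar> powr (p - 1)\<bar> * F (Tm p x)) absolutely_integrable_on S"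
      using GS by (subst set_integrable_cong[OF refl refl eqS]) auto
    show "integral S (\<lambda>x. \<bar>p * \<bar>x\<bar> powr (p - 1)\<bar> * F (Tm p x)) = b"
      using intGS by (subst integral_cong[OF eqS]) auto
  qed
  then have R: "F absolutely_integrable_on S" "integral S F = b"
    using has_absolute_integral_change_of_variables_1'[OF Sl der inj, of F b] img by auto
  have Feq: "(\<lambda>x. indicator S x *\<^sub>R F x) = F"
    by (auto simp: S_def F_def indicator_def fun_eq_iff)
  have FL: "integrable lebesgue F"
    using R(1) unfolding set_integrable_def Feq .
  have "integral\<^sup>L lebesgue F = b"
    using set_lebesgue_integral_eq_integral(2)[OF R(1)] R(2)
    unfolding set_lebesgue_integral_def Feq by simp
  then show ?thesis
    using FL Fm integrable_completion[of F lborel] integral_completion[of F lborel]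
    unfolding F_def[abs_def] b_def by auto
qed

lemma ent0:
  assumes p: "p > 0"
  shows "integrable lborel (\<lambda>y. dens0 (1/p) y * ln (dens0 (1/p) y)) \<and>
         integral\<^sup>L lborel (\<lambda>y. dens0 (1/p) y * ln (dens0 (1/p) y))
          = - ln (sqrt (2 * pi)) - ln p - (1 - p) * (euler_mascheroni + ln 2) / 2 - 1/2"
proof -
  define K where "K g = std_normal_density g * (- ln (sqrt (2 * pi)) - ln p)
      + (1 - p) * (std_normal_density g * ln \<bar>g\<bar>) - 1/2 * (std_normal_density g * g ^ 2)" for g
  have Keq: "std_normal_density g * ln (dens0 (1/p) (Tm p g)) = K g" if g: "g \<noteq> 0" for g
  proof -
    have k: "\<bar>p * \<bar>g\<bar> powr (p - 1)\<bar> * dens0 (1/p) (Tm p g) = std_normal_density g"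
      by (rule Tm_key[OF p g])
    have pos: "p * \<bar>g\<bar> powr (p - 1) > 0" using p g by simp
    then have d: "dens0 (1/p) (Tm p g) = std_normal_density g / (p * \<bar>g\<bar> powr (p - 1))"
    proof -
      have k': "(p * \<bar>g\<bar> powr (p - 1)) * dens0 (1/p) (Tm p g) = std_normal_density g"
        using k pos by (simp only: abs_of_pos)
      show ?thesis using k' pos p g by (simp add: eq_divide_eq mult.commute)
    qed
    have phipos: "std_normal_density g > 0" by (simp add: normal_density_pos)
    have "ln (dens0 (1/p) (Tm p g)) = ln (std_normal_density g) - ln p - (p - 1) * ln \<bar>g\<bar>"
      unfolding d using pos phipos p g by (simp add: ln_div ln_mult ln_powr)
    also have "ln (std_normal_density g) = - ln (sqrt (2 * pi)) - g^2 / 2"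
      by (simp add: std_normal_density_def ln_mult ln_div)
    finally have L: "ln (dens0 (1/p) (Tm p g)) = - ln (sqrt (2 * pi)) - g^2 / 2 - ln p - (p - 1) * ln \<bar>g\<bar>" .
    show ?thesis unfolding K_def L by (simp add: algebra_simps)
  qed
  have KI: "integrable lborel K"
    unfolding K_def using phi_ln_lborel integrable_std_normal_moment[of 2]
    by (intro Bochner_Integration.integrable_add Bochner_Integration.integrable_diff
        integrable_mult_right integrable_mult_left) auto
  have KV: "integral\<^sup>L lborel K = - ln (sqrt (2 * pi)) - ln p - (1 - p) * (euler_mascheroni + ln 2) / 2 - 1/2"
  proof -
    have m2: "integral\<^sup>L lborel (\<lambda>x. std_normal_density x * x ^ 2) = 1"
      using integral_std_normal_moment_even[of 1] by simp
    have "integral\<^sup>L lborel K = 1 * (- ln (sqrt (2 * pi)) - ln p)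
        + (1 - p) * (- (euler_mascheroni + ln 2) / 2) - 1/2 * 1"
      unfolding K_def using phi_ln_lborel integrable_std_normal_moment[of 2] m2
      by (subst Bochner_Integration.integral_diff Bochner_Integration.integral_add integral_mult_right
          integral_mult_left, auto)+
    then show ?thesis by (simp add: field_simps)
  qed
  have AE0: "AE g in lborel. g \<noteq> 0" by (rule AE_lborel_singleton)
  have m: "(\<lambda>g. std_normal_density g * ln (dens0 (1/p) (Tm p g))) \<in> borel_measurable lborel"
    by measurable
  have I: "integrable lborel (\<lambda>g. std_normal_density g * ln (dens0 (1/p) (Tm p g)))"
    using KI by (rule integrable_cong_AE_imp[OF _ m]) (use AE0 Keq in \<open>auto elim!: AE_mp\<close>)
  have V: "integral\<^sup>L lborel (\<lambda>g. std_normal_density g * ln (dens0 (1/p) (Tm p g))) = integral\<^sup>L lborel K"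
    by (rule integral_cong_AE[OF m]) (use AE0 Keq borel_measurable_integrable[OF KI] in \<open>auto elim!: AE_mp\<close>)
  have "(\<lambda>y. ln (dens0 (1/p) y)) \<in> borel_measurable borel" by measurable
  from CV[OF p I this] V KV show ?thesis by simp
qed

lemma distr_Tm:
  assumes p: "p > 0"
  shows "distr (density lborel (\<lambda>x. ennreal (std_normal_density x))) lborel (Tm p)
         = density lborel (\<lambda>x. ennreal (dens0 (1/p) x))"
proof (rule measure_eqI)
  show "sets (distr (density lborel (\<lambda>x. ennreal (std_normal_density x))) lborel (Tm p)) =
        sets (density lborel (\<lambda>x. ennreal (dens0 (1/p) x)))" by simp
  fix A assume "A \<in> sets (distr (density lborel (\<lambda>x. ennreal (std_normal_density x))) lborel (Tm p))"
  then have A[measurable]: "A \<in> sets borel" by simp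
  have Tmm: "Tm p \<in> measurable lborel lborel" by simp
  have B: "Tm p -` A \<in> sets borel" using Tm_meas A by (rule measurable_sets_borel)
  have I: "integrable lborel (\<lambda>g. std_normal_density g * indicator A (Tm p g))"
  proof -
    have "integrable lborel (\<lambda>g. std_normal_density g * indicator (Tm p -` A) g)"
      using B by (intro integrable_real_mult_indicator) auto
    then show ?thesis by (simp add: indicator_def)
  qed
  have "emeasure (distr (density lborel (\<lambda>x. ennreal (std_normal_density x))) lborel (Tm p)) A
      = emeasure (density lborel (\<lambda>x. ennreal (std_normal_density x))) (Tm p -` A)"
    by (subst emeasure_distr) (use A in auto)
  also have "\<dots> = (\<integral>\<^sup>+ x. ennreal (std_normal_density x * indicator A (Tm p x)) \<partial>lborel)"
    using B by (subst emeasure_density) (auto intro!: nn_integral_cong simp: indicator_def)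
  also have "\<dots> = ennreal (integral\<^sup>L lborel (\<lambda>x. std_normal_density x * indicator A (Tm p x)))"
    using I by (intro nn_integral_eq_integral) auto
  also have "\<dots> = ennreal (integral\<^sup>L lborel (\<lambda>y. dens0 (1/p) y * indicator A y))"
    using CV[OF p I] by simp
  also have "\<dots> = (\<integral>\<^sup>+ y. ennreal (dens0 (1/p) y * indicator A y) \<partial>lborel)"
    using CV[OF p I] p by (intro nn_integral_eq_integral[symmetric]) (auto intro!: AE_I2 mult_nonneg_nonneg dens0_nonneg)
  also have "\<dots> = emeasure (density lborel (\<lambda>x. ennreal (dens0 (1/p) x))) A"
    by (subst emeasure_density) (auto intro!: nn_integral_cong simp: indicator_def)
  finally show "emeasure (distr (density lborel (\<lambda>x. ennreal (std_normal_density x))) lborel (Tm p)) A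
      = emeasure (density lborel (\<lambda>x. ennreal (dens0 (1/p) x))) A" .
qed

theorem mainTheorem3:
  fixes M :: "'a measure" and G :: "'a \<Rightarrow> real" and f :: "real \<Rightarrow> real" and \<alpha> :: real
  assumes "prob_space M"
    and "\<alpha> > 0"
    and "distributed M lborel G (\<lambda>x. ennreal (std_normal_density x))"
    and "\<And>x. 0 \<le> f x"
    and "distributed M lborel (\<lambda>\<omega>. sgn (G \<omega>) * \<bar>G \<omega>\<bar> powr (2 / \<alpha>)) (\<lambda>x. ennreal (f x))"
  shows "integrable lborel (\<lambda>x. f x * ln (f x)) \<and>
         diff_entropy f = (1/2 - 1/\<alpha>) * (euler_mascheroni + ln 2) + ln (2 * sqrt (2 * pi) / \<alpha>) + 1/2"
proof -
  define p where "p = 2 / \<alpha>"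
  have p: "p > 0" using assms(2) by (simp add: p_def)
  have Gm[measurable]: "G \<in> measurable M lborel" using distributed_measurable[OF assms(3)] .
  have Tmm: "Tm p \<in> measurable lborel lborel" by simp
  have Yeq: "(\<lambda>\<omega>. sgn (G \<omega>) * \<bar>G \<omega>\<bar> powr (2 / \<alpha>)) = Tm p \<circ> G"
    by (auto simp: Tm_def p_def fun_eq_iff)
  have "distr M lborel (Tm p \<circ> G) = distr (distr M lborel G) lborel (Tm p)"
    by (rule distr_distr[symmetric, OF Tmm Gm])
  also have "\<dots> = density lborel (\<lambda>x. ennreal (dens0 (1/p) x))"
    unfolding distributed_distr_eq_density[OF assms(3)] by (rule distr_Tm[OF p])
  finally have D: "distributed M lborel (Tm p \<circ> G) (\<lambda>x. ennreal (dens0 (1/p) x))"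
    unfolding distributed_def using Gm Tmm by auto
  interpret prob_space M by (rule assms(1))
  have "AE x in lborel. ennreal (f x) = ennreal (dens0 (1/p) x)"
    using distributed_unique[OF assms(5)[unfolded Yeq] D] .
  then have AEf: "AE x in lborel. f x = dens0 (1/p) x"
    by eventually_elim (use assms(4) dens0_nonneg[of "1/p"] p in auto)
  have fm[measurable]: "f \<in> borel_measurable borel"
    using distributed_real_measurable[OF _ assms(5)] assms(4) by simp
  have AE2: "AE x in lborel. f x * ln (f x) = dens0 (1/p) x * ln (dens0 (1/p) x)"
    using AEf by eventually_elim simp
  note E = ent0[OF p]
  have I: "integrable lborel (\<lambda>x. f x * ln (f x))"
    using E by (intro integrable_cong_AE_imp[OF conjunct1[OF E]]) (use AE2 in \<open>auto elim!: AE_mp\<close>)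
  have "integral\<^sup>L lborel (\<lambda>x. f x * ln (f x)) = integral\<^sup>L lborel (\<lambda>x. dens0 (1/p) x * ln (dens0 (1/p) x))"
    by (rule integral_cong_AE) (use AE2 in auto)
  also have "\<dots> = - ln (sqrt (2 * pi)) - ln p - (1 - p) * (euler_mascheroni + ln 2) / 2 - 1/2"
    using E by simp
  finally have V: "integral\<^sup>L lborel (\<lambda>x. f x * ln (f x)) = - ln (sqrt (2 * pi)) - ln p - (1 - p) * (euler_mascheroni + ln 2) / 2 - 1/2" .
  have l: "ln (2 * sqrt (2 * pi) / \<alpha>) = ln p + ln (sqrt (2 * pi))"
    using assms(2) by (simp add: p_def ln_div ln_mult)
  have h: "1/2 - 1/\<alpha> = (1 - p) / 2" using assms(2) by (simp add: p_def field_simps)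
  show ?thesis
    using I unfolding diff_entropy_def V l h by (simp add: field_simps)
qed

end
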